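(* Let $n\ge3$, let $G_2=\overline{L(K_{2,n})}$, and let $G_1$ be a finite bipartite graph with bipartition $(X,Y)$ ($X,Y$ nonempty) such that some vertex is adjacent to all of $X$ and some vertex is adjacent to all of $Y$, and with $\Delta(G_1)\ge n$. If the two-squares graph does not embed in $G_1$, then $G_1$ and $G_2$ are $\mathcal{C}$-$\mathrm{HH}$-symmetric.
   Context: $\Delta$ denotes maximum degree. "Embeds" means is isomorphic to an induced subgraph. The two-squares graph is the $6$-cycle $v_1\dots v_6v_1$ with the single chord $v_3v_6$. $\overline{L(K_{2,n})}$ is the bipartite graph with parts $\{x_1,\dots,x_n\}$, $\{y_1,\dots,y_n\}$ and $x_i\sim y_j$ iff $i\ne j$. A homomorphism maps edges to edges. $G_1$ is $\mathcal{C}$-$\mathrm{HH}$-morphic to $G_2$ if every homomorphism from a finite connected induced subgraph $A$ of $G_1$ onto an induced subgraph $B$ of $G_2$ extends to a homomorphism $G_1\to G_2$; $G_1,G_2$ are $\mathcal{C}$-$\mathrm{HH}$-symmetric if each is $\mathcal{C}$-$\mathrm{HH}$-morphic to the other. *)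

theory Defs
  imports Main
begin

definition simple_graph :: "'a set \<Rightarrow> ('a \<Rightarrow> 'a \<Rightarrow> bool) \<Rightarrow> bool" where
  "simple_graph V E \<longleftrightarrow> (\<forall>u v. E u v \<longrightarrow> u \<in> V \<and> v \<in> V) \<and> (\<forall>u v. E u v \<longrightarrow> E v u) \<and> (\<forall>v. \<not> E v v)"

definition graph_hom :: "'a set \<Rightarrow> ('a \<Rightarrow> 'a \<Rightarrow> bool) \<Rightarrow> 'b set \<Rightarrow> ('b \<Rightarrow> 'b \<Rightarrow> bool) \<Rightarrow> ('a \<Rightarrow> 'b) \<Rightarrow> bool" where
  "graph_hom V1 E1 V2 E2 f \<longleftrightarrow> (\<forall>v\<in>V1. f v \<in> V2) \<and> (\<forall>u\<in>V1. \<forall>v\<in>V1. E1 u v \<longrightarrow> E2 (f u) (f v))"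

definition connected_on :: "('a \<Rightarrow> 'a \<Rightarrow> bool) \<Rightarrow> 'a set \<Rightarrow> bool" where
  "connected_on E S \<longleftrightarrow> S \<noteq> {} \<and>
     (\<forall>u\<in>S. \<forall>v\<in>S. (u, v) \<in> {(a, b). a \<in> S \<and> b \<in> S \<and> E a b}\<^sup>*)"

text \<open>Homomorphisms between induced subgraphs G1[S] and G2[T] are exactly graph_hom S E1 T E2.\<close>
definition C_HH_morphic :: "'a set \<Rightarrow> ('a \<Rightarrow> 'a \<Rightarrow> bool) \<Rightarrow> 'b set \<Rightarrow> ('b \<Rightarrow> 'b \<Rightarrow> bool) \<Rightarrow> bool" where
  "C_HH_morphic V1 E1 V2 E2 \<longleftrightarrow>
     (\<forall>S T f. S \<subseteq> V1 \<and> finite S \<and> connected_on E1 S \<and> T \<subseteq> V2 \<and>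
        graph_hom S E1 T E2 f \<and> f ` S = T \<longrightarrow>
        (\<exists>g. graph_hom V1 E1 V2 E2 g \<and> (\<forall>v\<in>S. g v = f v)))"

definition C_HH_symmetric :: "'a set \<Rightarrow> ('a \<Rightarrow> 'a \<Rightarrow> bool) \<Rightarrow> 'b set \<Rightarrow> ('b \<Rightarrow> 'b \<Rightarrow> bool) \<Rightarrow> bool" where
  "C_HH_symmetric V1 E1 V2 E2 \<longleftrightarrow> C_HH_morphic V1 E1 V2 E2 \<and> C_HH_morphic V2 E2 V1 E1"

text \<open>Complement of the line graph of K_{2,n}: x_i = (False, i), y_j = (True, j), 1 \<le> i,j \<le> n,
  x_i ~ y_j iff i \<noteq> j.\<close>
definition co_LK2n_V :: "nat \<Rightarrow> (bool \<times> nat) set" where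
  "co_LK2n_V n = UNIV \<times> {1..n}"

definition co_LK2n_E :: "nat \<Rightarrow> bool \<times> nat \<Rightarrow> bool \<times> nat \<Rightarrow> bool" where
  "co_LK2n_E n u v \<longleftrightarrow> u \<in> co_LK2n_V n \<and> v \<in> co_LK2n_V n \<and> fst u \<noteq> fst v \<and> snd u \<noteq> snd v"

definition two_squares_E :: "nat \<Rightarrow> nat \<Rightarrow> bool" where
  "two_squares_E i j \<longleftrightarrow> {i, j} \<in> {{1,2},{2,3},{3,4},{4,5},{5,6},{6,1},{3,6}}"

definition two_squares_embeds :: "'a set \<Rightarrow> ('a \<Rightarrow> 'a \<Rightarrow> bool) \<Rightarrow> bool" where
  "two_squares_embeds V E \<longleftrightarrow> (\<exists>h. inj_on h {1..6::nat} \<and> h ` {1..6} \<subseteq> V \<and>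
      (\<forall>i\<in>{1..6}. \<forall>j\<in>{1..6}. E (h i) (h j) \<longleftrightarrow> two_squares_E i j))"

definition degree :: "'a set \<Rightarrow> ('a \<Rightarrow> 'a \<Rightarrow> bool) \<Rightarrow> 'a \<Rightarrow> nat" where
  "degree V E v = card {u \<in> V. E v u}"

end

theory Submission
  imports Defs
begin

lemma ts_eval:
  "two_squares_E i j \<longleftrightarrow> {i, j} \<in> {{1,2},{2,3},{3,4},{4,5},{5,6},{6,1},{3,6}}"
  by (simp add: two_squares_E_def)

lemma chain_lemma:
  assumes sym: "\<forall>u v. E u v \<longrightarrow> E v u"
    and bip: "\<forall>u v. E u v \<longrightarrow> (u\<in>P \<and> v\<in>Q) \<or> (u\<in>Q \<and> v\<in>P)"
    and PQ: "P \<inter> Q = {}" and PV: "P \<subseteq> V" "Q \<subseteq> V"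
    and p0: "p0 \<in> P" "\<forall>q\<in>Q. E p0 q" and q0: "q0 \<in> Q" "\<forall>p\<in>P. E q0 p"
    and ne: "\<not> two_squares_embeds V E"
    and p: "p \<in> P" "p' \<in> P"
  shows "{y. E p y} \<subseteq> {y. E p' y} \<or> {y. E p' y} \<subseteq> {y. E p y}"
proof (rule ccontr)
  assume "\<not> ?thesis"
  then obtain y2 y4 where e: "E p y2" "\<not> E p' y2" "E p' y4" "\<not> E p y4" by auto
  have y2: "y2 \<in> Q" using bip e(1) p PQ by blast
  have y4: "y4 \<in> Q" using bip e(3) p PQ by blast
  have d1: "p \<noteq> p0" using p0 y4 e by auto
  have d2: "p' \<noteq> p0" using p0 y2 e by auto
  have d3: "y2 \<noteq> q0" using q0 p sym e by blast
  have d4: "y4 \<noteq> q0" using q0 p sym e by blast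
  have d5: "p \<noteq> p'" using e by auto
  have d6: "y2 \<noteq> y4" using e by auto
  have noPP: "\<And>u v. u \<in> P \<Longrightarrow> v \<in> P \<Longrightarrow> \<not> E u v" using bip PQ by blast
  have noQQ: "\<And>u v. u \<in> Q \<Longrightarrow> v \<in> Q \<Longrightarrow> \<not> E u v" using bip PQ by blast
  have dPQ: "\<And>u v. u \<in> P \<Longrightarrow> v \<in> Q \<Longrightarrow> u \<noteq> v" using PQ by blast
  define h where "h = (\<lambda>i::nat. if i=1 then p else if i=2 then y2 else if i=3 then p0
      else if i=4 then y4 else if i=5 then p' else q0)"
  have U: "{1..6::nat} = {1,2,3,4,5,6}" by auto
  have "two_squares_embeds V E"
    unfolding two_squares_embeds_def
  proof (intro exI conjI)
    show "inj_on h {1..6}" unfolding U inj_on_def h_def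
      using d1 d2 d3 d4 d5 d6 dPQ[OF p(1) y2] dPQ[OF p(1) y4] dPQ[OF p(1) q0(1)]
        dPQ[OF p(2) y2] dPQ[OF p(2) y4] dPQ[OF p(2) q0(1)]
        dPQ[OF p0(1) y2] dPQ[OF p0(1) y4] dPQ[OF p0(1) q0(1)]
      by auto
    show "h ` {1..6} \<subseteq> V" unfolding U h_def using PV p p0 q0 y2 y4 by auto
    have E12: "E p y2" "E y2 p" using e sym by auto
    have E23: "E y2 p0" "E p0 y2" using p0 y2 sym by auto
    have E34: "E p0 y4" "E y4 p0" using p0 y4 sym by auto
    have E45: "E y4 p'" "E p' y4" using e sym by auto
    have E56: "E p' q0" "E q0 p'" using q0 p sym by auto
    have E61: "E q0 p" "E p q0" using q0 p sym by auto
    have E36: "E p0 q0" "E q0 p0" using q0 p0 sym by auto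
    have N14: "\<not> E p y4" "\<not> E y4 p" using e sym by auto
    have N25: "\<not> E y2 p'" "\<not> E p' y2" using e sym by auto
    show "\<forall>i\<in>{1..6}. \<forall>j\<in>{1..6}. E (h i) (h j) = two_squares_E i j"
      unfolding U h_def ts_eval
      using E12 E23 E34 E45 E56 E61 E36 N14 N25
        noPP[OF p(1) p(1)] noPP[OF p(1) p(2)] noPP[OF p(1) p0(1)]
        noPP[OF p(2) p(1)] noPP[OF p(2) p(2)] noPP[OF p(2) p0(1)]
        noPP[OF p0(1) p(1)] noPP[OF p0(1) p(2)] noPP[OF p0(1) p0(1)]
        noQQ[OF y2 y2] noQQ[OF y2 y4] noQQ[OF y2 q0(1)]
        noQQ[OF y4 y2] noQQ[OF y4 y4] noQQ[OF y4 q0(1)]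
        noQQ[OF q0(1) y2] noQQ[OF q0(1) y4] noQQ[OF q0(1) q0(1)]
      by (simp add: doubleton_eq_iff insert_commute)
  qed
  with ne show False by simp
qed


lemma max_nbhd:
  assumes fin: "finite V" and A: "finite A" "A \<noteq> {}"
    and cmp: "\<And>a a'. a \<in> A \<Longrightarrow> a' \<in> A \<Longrightarrow> {y. E a y} \<subseteq> {y. E a' y} \<or> {y. E a' y} \<subseteq> {y. E a y}"
    and sub: "\<And>a y. E a y \<Longrightarrow> y \<in> V"
  shows "\<exists>a\<in>A. \<forall>a'\<in>A. {y. E a' y} \<subseteq> {y. E a y}"
proof -
  define c where "c = (\<lambda>a. card {y. E a y})"
  have "Max (c ` A) \<in> c ` A" using A by simp
  then obtain a where a: "a \<in> A" "c a = Max (c ` A)" by auto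
  have fN: "\<And>x. finite {y. E x y}" using fin sub by (meson mem_Collect_eq rev_finite_subset subsetI)
  show ?thesis
  proof (intro bexI[OF _ a(1)] ballI)
    fix a' assume a': "a' \<in> A"
    have le: "c a' \<le> c a" using a a' A by simp
    show "{y. E a' y} \<subseteq> {y. E a y}"
    proof (cases "{y. E a y} \<subseteq> {y. E a' y}")
      case True
      then have "card {y. E a y} \<le> card {y. E a' y}" using fN by (simp add: card_mono)
      then have "card {y. E a y} = card {y. E a' y}" using le c_def by simp
      then have "{y. E a y} = {y. E a' y}" using True fN card_subset_eq by metis
      then show ?thesis by simp
    next
      case False then show ?thesis using cmp a(1) a' by blast
    qed
  qed
qed

lemma conn_nb:
  assumes "connected_on E S" "s \<in> S" "z \<in> S" "s \<noteq> z"
  shows "\<exists>w\<in>S. E s w"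
proof -
  have "(s, z) \<in> {(a, b). a \<in> S \<and> b \<in> S \<and> E a b}\<^sup>*" using assms unfolding connected_on_def by blast
  then show ?thesis using assms(4) by (cases rule: converse_rtranclE) auto
qed

theorem corollary6p7:
  fixes V :: "'a set" and E :: "'a \<Rightarrow> 'a \<Rightarrow> bool" and X Y :: "'a set" and n :: nat
  assumes "n \<ge> 3"
    and "simple_graph V E" and "finite V"
    and "X \<union> Y = V" and "X \<inter> Y = {}" and "X \<noteq> {}" and "Y \<noteq> {}"
    and "\<forall>u v. E u v \<longrightarrow> (u \<in> X \<and> v \<in> Y) \<or> (u \<in> Y \<and> v \<in> X)"
    and "\<exists>v\<in>V. \<forall>x\<in>X. E v x"
    and "\<exists>v\<in>V. \<forall>y\<in>Y. E v y"
    and "\<exists>v\<in>V. degree V E v \<ge> n"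
    and "\<not> two_squares_embeds V E"
  shows "C_HH_symmetric V E (co_LK2n_V n) (co_LK2n_E n)"
proof -
  note n3 = assms(1)
  have sym: "\<forall>u v. E u v \<longrightarrow> E v u" and inV: "\<And>u v. E u v \<Longrightarrow> u \<in> V \<and> v \<in> V"
    using assms(2) unfolding simple_graph_def by auto
  note bip = assms(8)
  have symE: "\<And>u v. E u v \<Longrightarrow> E v u" using sym by blast
  obtain y0 where y0: "y0 \<in> V" "\<forall>x\<in>X. E y0 x" using assms(9) by blast
  obtain x0 where x0: "x0 \<in> V" "\<forall>y\<in>Y. E x0 y" using assms(10) by blast
  have y0Y: "y0 \<in> Y" using y0 assms(6) bip assms(5) by blast
  have x0X: "x0 \<in> X" using x0 assms(7) bip assms(5) by blast
  have XV: "X \<subseteq> V" and YV: "Y \<subseteq> V" using assms(4) by auto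
  have cmpX: "\<And>p p'. p \<in> X \<Longrightarrow> p' \<in> X \<Longrightarrow> {y. E p y} \<subseteq> {y. E p' y} \<or> {y. E p' y} \<subseteq> {y. E p y}"
    by (rule chain_lemma[OF sym bip assms(5) XV YV x0X x0(2) y0Y y0(2) assms(12)])
  have bip': "\<forall>u v. E u v \<longrightarrow> (u \<in> Y \<and> v \<in> X) \<or> (u \<in> X \<and> v \<in> Y)" using bip by blast
  have YX: "Y \<inter> X = {}" using assms(5) by blast
  have cmpY: "\<And>p p'. p \<in> Y \<Longrightarrow> p' \<in> Y \<Longrightarrow> {y. E p y} \<subseteq> {y. E p' y} \<or> {y. E p' y} \<subseteq> {y. E p y}"
    by (rule chain_lemma[OF sym bip' YX YV XV y0Y y0(2) x0X x0(2) assms(12)])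
  have sym2: "\<And>u v. co_LK2n_E n u v \<Longrightarrow> co_LK2n_E n v u" unfolding co_LK2n_E_def by auto
  have side: "\<And>v. v \<in> V \<Longrightarrow> v \<in> X \<longleftrightarrow> v \<notin> Y" using assms(4,5) by blast
  have D1: "C_HH_morphic V E (co_LK2n_V n) (co_LK2n_E n)"
    unfolding C_HH_morphic_def
  proof (intro allI impI)
    fix S T f
    assume h: "S \<subseteq> V \<and> finite S \<and> connected_on E S \<and> T \<subseteq> co_LK2n_V n \<and>
        graph_hom S E T (co_LK2n_E n) f \<and> f ` S = T"
    then have SV: "S \<subseteq> V" and fS: "finite S" and cS: "connected_on E S"
      and TV: "T \<subseteq> co_LK2n_V n" and hom: "graph_hom S E T (co_LK2n_E n) f" by auto
    obtain s where s: "s \<in> S" using cS unfolding connected_on_def by blast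
    show "\<exists>g. graph_hom V E (co_LK2n_V n) (co_LK2n_E n) g \<and> (\<forall>v\<in>S. g v = f v)"
    proof (cases "S = {s}")
      case True
      have fs: "f s \<in> co_LK2n_V n" using hom s TV unfolding graph_hom_def by auto
      obtain b i where bi: "f s = (b, i)" by (cases "f s")
      define j where "j = (if i = 1 then 2 else (1::nat))"
      have ij: "i \<in> {1..n}" "j \<in> {1..n}" "i \<noteq> j" using fs bi n3 unfolding co_LK2n_V_def j_def by auto
      define t where "t = (\<not> b, j)"
      have adj: "co_LK2n_E n (f s) t" "co_LK2n_E n t (f s)"
        using ij unfolding bi t_def co_LK2n_E_def co_LK2n_V_def by auto
      have tV: "t \<in> co_LK2n_V n" using ij unfolding t_def co_LK2n_V_def by auto
      define g where "g = (\<lambda>v. if (v \<in> X \<longleftrightarrow> s \<in> X) then f s else t)"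
      show ?thesis
      proof (intro exI conjI)
        show "graph_hom V E (co_LK2n_V n) (co_LK2n_E n) g"
          unfolding graph_hom_def
        proof (intro conjI ballI impI)
          fix v show "g v \<in> co_LK2n_V n" using fs tV unfolding g_def by simp
        next
          fix u v assume e: "E u v"
          have "(u \<in> X \<and> v \<notin> X) \<or> (u \<notin> X \<and> v \<in> X)" using bip e assms(5) by blast
          then show "co_LK2n_E n (g u) (g v)" unfolding g_def using adj by (cases "s \<in> X") auto
        qed
        show "\<forall>v\<in>S. g v = f v" using True g_def by simp
      qed
    next
      case False
      then obtain z where z: "z \<in> S" "z \<noteq> s" using s by blast
      have nb: "\<And>v. v \<in> S \<Longrightarrow> \<exists>w\<in>S. E v w"
      proof -
        fix v assume v: "v \<in> S"
        show "\<exists>w\<in>S. E v w"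
        proof (cases "v = s")
          case True then show ?thesis using conn_nb[OF cS v z(1)] z by simp
        next
          case False then show ?thesis using conn_nb[OF cS v s] by simp
        qed
      qed
      obtain w where w: "w \<in> S" "E s w" using nb s by blast
      have SXne: "S \<inter> X \<noteq> {}" and SYne: "S \<inter> Y \<noteq> {}" using w s bip by blast+
      have fin: "finite (S \<inter> X)" "finite (S \<inter> Y)" using fS by auto
      have subE: "\<And>a y. E a y \<Longrightarrow> y \<in> V" using inV by blast
      obtain a where a: "a \<in> S \<inter> X" "\<forall>a'\<in>S \<inter> X. {y. E a' y} \<subseteq> {y. E a y}"
        using max_nbhd[OF assms(3) fin(1) SXne, of E] cmpX subE by blast
      obtain b where b: "b \<in> S \<inter> Y" "\<forall>a'\<in>S \<inter> Y. {y. E a' y} \<subseteq> {y. E b y}"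
        using max_nbhd[OF assms(3) fin(2) SYne, of E] cmpY subE by blast
      have aY: "\<And>y. y \<in> S \<inter> Y \<Longrightarrow> E a y"
      proof -
        fix y assume y: "y \<in> S \<inter> Y"
        obtain u where u: "u \<in> S" "E y u" using nb y by blast
        have "u \<in> X" using u y bip assms(5) by blast
        then show "E a y" using a u sym by blast
      qed
      have bX: "\<And>x. x \<in> S \<inter> X \<Longrightarrow> E b x"
      proof -
        fix x assume x: "x \<in> S \<inter> X"
        obtain u where u: "u \<in> S" "E x u" using nb x by blast
        have "u \<in> Y" using u x bip assms(5) by blast
        then show "E b x" using b u sym by blast
      qed
      define r where "r = (\<lambda>v. if v \<in> S then v else if v \<in> X then a else b)"
      have rS: "\<And>v. r v \<in> S" using a b unfolding r_def by auto
      have rE: "\<And>u v. E u v \<Longrightarrow> E (r u) (r v)"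
      proof -
        fix u v assume e: "E u v"
        have ab: "E a b" "E b a" using aY b symE by auto
        show "E (r u) (r v)"
        proof (cases "u \<in> X")
          case True
          then have vY: "v \<in> Y" "u \<notin> Y" "v \<notin> X" using e bip assms(5) by blast+
          show ?thesis
          proof (cases "u \<in> S")
            case uS: True
            show ?thesis
            proof (cases "v \<in> S")
              case True then show ?thesis using uS e unfolding r_def by simp
            next
              case False then have "r v = b" using vY unfolding r_def by simp
              moreover have "E u b" using bX[of u] uS \<open>u \<in> X\<close> symE by blast
              ultimately show ?thesis using uS unfolding r_def by simp
            qed
          next
            case uS: False
            then have ru: "r u = a" using True unfolding r_def by simp
            show ?thesis
            proof (cases "v \<in> S")
              case True then show ?thesis using ru aY[of v] vY unfolding r_def by simp
            next
              case False then have "r v = b" using vY unfolding r_def by simp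
              then show ?thesis using ru ab by simp
            qed
          qed
        next
          case False
          then have "u \<in> Y" "v \<in> X" "v \<notin> Y" using e bip assms(5) by blast+
          then have uY: "u \<in> Y" and vX: "v \<in> X" "v \<notin> Y" by auto
          show ?thesis
          proof (cases "u \<in> S")
            case uS: True
            show ?thesis
            proof (cases "v \<in> S")
              case True then show ?thesis using uS e unfolding r_def by simp
            next
              case False then have "r v = a" using vX unfolding r_def by simp
              moreover have "E u a" using aY[of u] uS uY symE by blast
              ultimately show ?thesis using uS unfolding r_def by simp
            qed
          next
            case uS: False
            then have ru: "r u = b" using \<open>u \<notin> X\<close> unfolding r_def by simp
            show ?thesis
            proof (cases "v \<in> S")
              case True then show ?thesis using ru bX[of v] vX unfolding r_def by simp
            next
              case False then have "r v = a" using vX unfolding r_def by simp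
              then show ?thesis using ru ab by simp
            qed
          qed
        qed
      qed
      show ?thesis
      proof (intro exI conjI)
        show "graph_hom V E (co_LK2n_V n) (co_LK2n_E n) (f \<circ> r)"
          unfolding graph_hom_def using hom TV rS rE unfolding graph_hom_def by auto
        show "\<forall>v\<in>S. (f \<circ> r) v = f v" unfolding r_def by simp
      qed
    qed
  qed
  have D2: "C_HH_morphic (co_LK2n_V n) (co_LK2n_E n) V E"
    unfolding C_HH_morphic_def
  proof (intro allI impI)
    fix S T f
    assume h: "S \<subseteq> co_LK2n_V n \<and> finite S \<and> connected_on (co_LK2n_E n) S \<and> T \<subseteq> V \<and>
        graph_hom S (co_LK2n_E n) T E f \<and> f ` S = T"
    then have cS: "connected_on (co_LK2n_E n) S"
      and TV: "T \<subseteq> V" and hom: "graph_hom S (co_LK2n_E n) T E f" by auto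
    have fV: "\<And>s. s \<in> S \<Longrightarrow> f s \<in> V" using hom TV unfolding graph_hom_def by auto
    obtain s0 where s0: "s0 \<in> S" using cS unfolding connected_on_def by blast
    define P where "P = (\<lambda>v::bool\<times>nat. (fst v = fst s0) \<longleftrightarrow> (f s0 \<in> X))"
    have Pf: "\<And>s. s \<in> S \<Longrightarrow> f s \<in> X \<longleftrightarrow> P s"
    proof -
      fix s assume s: "s \<in> S"
      have "(s0, s) \<in> {(a, b). a \<in> S \<and> b \<in> S \<and> co_LK2n_E n a b}\<^sup>*"
        using cS s s0 unfolding connected_on_def by blast
      then show "f s \<in> X \<longleftrightarrow> P s"
      proof (induction rule: rtrancl_induct)
        case base then show ?case unfolding P_def by simp
      next
        case (step y z)
        then have yz: "y \<in> S" "z \<in> S" "co_LK2n_E n y z" by auto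
        have "E (f y) (f z)" using hom yz unfolding graph_hom_def by auto
        then have "f y \<in> X \<longleftrightarrow> f z \<notin> X" using bip assms(5) by blast
        moreover have "fst y \<noteq> fst z" using yz(3) unfolding co_LK2n_E_def by auto
        ultimately show ?case using step.IH unfolding P_def by auto
      qed
    qed
    define g where "g = (\<lambda>v. if v \<in> S then f v else if P v then x0 else y0)"
    have gX: "\<And>v. P v \<Longrightarrow> g v \<in> X" using Pf x0X unfolding g_def by auto
    have gY: "\<And>v. \<not> P v \<Longrightarrow> g v \<in> Y"
    proof -
      fix v assume nP: "\<not> P v"
      show "g v \<in> Y"
      proof (cases "v \<in> S")
        case True then show ?thesis using Pf[OF True] nP fV[OF True] assms(4) unfolding g_def by auto
      next
        case False then show ?thesis using nP y0Y unfolding g_def by auto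
      qed
    qed
    have key: "\<And>u v. co_LK2n_E n u v \<Longrightarrow> P u \<Longrightarrow> E (g u) (g v)"
    proof -
      fix u v assume e: "co_LK2n_E n u v" and Pu: "P u"
      have nPv: "\<not> P v" using e Pu unfolding co_LK2n_E_def P_def by auto
      have gvY: "g v \<in> Y" using gY nPv .
      show "E (g u) (g v)"
      proof (cases "u \<in> S")
        case uS: True
        show ?thesis
        proof (cases "v \<in> S")
          case True then show ?thesis using uS hom e unfolding graph_hom_def g_def by auto
        next
          case False
          have "f u \<in> X" using Pf uS Pu by simp
          have "g v = y0" using False nPv unfolding g_def by simp
          moreover have "g u = f u" using uS unfolding g_def by simp
          moreover have "E y0 (f u)" using \<open>f u \<in> X\<close> y0 by blast
          ultimately show ?thesis using symE by metis
        qed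
      next
        case False
        then have "g u = x0" using Pu unfolding g_def by simp
        then show ?thesis using x0 gvY by simp
      qed
    qed
    show "\<exists>g. graph_hom (co_LK2n_V n) (co_LK2n_E n) V E g \<and> (\<forall>v\<in>S. g v = f v)"
    proof (intro exI conjI)
      show "graph_hom (co_LK2n_V n) (co_LK2n_E n) V E g"
        unfolding graph_hom_def
      proof (intro conjI ballI impI)
        fix v show "g v \<in> V" using fV x0 y0 unfolding g_def by auto
      next
        fix u v assume "co_LK2n_E n u v"
        then show "E (g u) (g v)"
        proof (cases "P u")
          case True then show ?thesis using key \<open>co_LK2n_E n u v\<close> by blast
        next
          case False
          have "P v" using \<open>co_LK2n_E n u v\<close> False unfolding co_LK2n_E_def P_def by auto
          then have "E (g v) (g u)" using key sym2 \<open>co_LK2n_E n u v\<close> by blast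
          then show ?thesis by (rule symE)
        qed
      qed
      show "\<forall>v\<in>S. g v = f v" unfolding g_def by simp
    qed
  qed
  show ?thesis unfolding C_HH_symmetric_def using D1 D2 by simp
qed

end
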